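(* Let $\Delta=\prod_{1\le i<j\le n}(x_i-x_j)$ and, for $0\le k\le n-1$ and $n-1\ge m_1>m_2>\dots>m_k\ge1$, let $\omega_{m_1,\dots,m_k}=d_{m_1}d_{m_2}\cdots d_{m_k}\Delta\in\Omega_n$ (with $\omega=\Delta$ when $k=0$). Then $\omega_{m_1,\dots,m_k}\in H_{\binom n2-\sum_i m_i,\,k}$ and $\sigma\omega_{m_1,\dots,m_k}=\mathrm{sgn}(\sigma)\omega_{m_1,\dots,m_k}$ for all $\sigma\in S_n$.
   Context: $\Omega_n=\mathbb{R}[x_1,\dots,x_n]\otimes\wedge\mathbb{R}^n$, with $S_n$ permuting indices of the $x_i$ and $dx_i$ simultaneously. With $\partial_i=\partial/\partial x_i$: $d_j(h\,dx_{i_1}\wedge\cdots\wedge dx_{i_k})=\sum_l(\partial_l^jh)\,dx_l\wedge dx_{i_1}\wedge\cdots\wedge dx_{i_k}$ and $\delta_l(h\,dx_{i_1}\wedge\cdots\wedge dx_{i_k})=\sum_j(\partial_j^lh)\,\iota(dx_j)(dx_{i_1}\wedge\cdots\wedge dx_{i_k})$, where $\iota(dx_j)$ is contraction ($0$ if $j\notin\{i_1<\dots<i_k\}$, $(-1)^{r-1}dx_{i_1}\wedge\cdots\widehat{dx_{i_r}}\cdots\wedge dx_{i_k}$ if $j=i_r$). A polynomial $f$ is $S_n$-harmonic if $\sum_i\partial_i^kf=0$ for $k=1,\dots,n$. $H_{r,s}$ is the space of $s$-forms $\sum_{i_1<\dots<i_s}h_{i_1\dots i_s}dx_{i_1}\wedge\cdots\wedge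 dx_{i_s}$ with every $h_{i_1\dots i_s}$ $S_n$-harmonic and homogeneous of degree $r$, and annihilated by $\delta_j$ for $j=0,\dots,n-1$. *)

theory Defs
  imports Complex_Main "HOL-Library.Poly_Mapping" "HOL-Combinatorics.Permutations"
begin

text \<open>Polynomials in variables x_0, x_1, ... (index i stands for x_(i+1) of the paper)
  with real coefficients: monomials are exponent vectors nat =>0 nat.\<close>
type_synonym mono = "nat \<Rightarrow>\<^sub>0 nat"
type_synonym rpoly = "mono \<Rightarrow>\<^sub>0 real"

text \<open>Differential forms: coefficient of dx_I for each finite index set I
  (the increasingly ordered wedge dx_(i_1) ^ ... ^ dx_(i_k)).\<close>
type_synonym dform = "nat set \<Rightarrow> rpoly"

definition Xv :: "nat \<Rightarrow> rpoly" where
  "Xv i = Poly_Mapping.single (Poly_Mapping.single i 1) 1"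

definition pderiv_var :: "nat \<Rightarrow> rpoly \<Rightarrow> rpoly" where
  "pderiv_var l p = (\<Sum>m\<in>Poly_Mapping.keys p.
      Poly_Mapping.single (m - Poly_Mapping.single l (1::nat))
        (real (Poly_Mapping.lookup (m::mono) l) * Poly_Mapping.lookup (p::rpoly) m))"

definition mono_deg :: "mono \<Rightarrow> nat" where
  "mono_deg m = (\<Sum>i\<in>Poly_Mapping.keys m. Poly_Mapping.lookup m i)"

definition homogeneous :: "nat \<Rightarrow> rpoly \<Rightarrow> bool" where
  "homogeneous r p \<longleftrightarrow> (\<forall>m\<in>Poly_Mapping.keys p. mono_deg m = r)"

definition poly_in_vars :: "nat \<Rightarrow> rpoly \<Rightarrow> bool" where
  "poly_in_vars n p \<longleftrightarrow> (\<forall>m\<in>Poly_Mapping.keys p. Poly_Mapping.keys m \<subseteq> {..<n})"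

definition Sn_harmonic :: "nat \<Rightarrow> rpoly \<Rightarrow> bool" where
  "Sn_harmonic n f \<longleftrightarrow> (\<forall>k\<in>{1..n}. (\<Sum>i<n. (pderiv_var i ^^ k) f) = 0)"

text \<open>Sign of dx_l moved past the elements of I smaller than l.\<close>
definition wsign :: "nat set \<Rightarrow> nat \<Rightarrow> rpoly" where
  "wsign I l = (-1) ^ card {i\<in>I. i < l}"

definition in_Omega :: "nat \<Rightarrow> dform \<Rightarrow> bool" where
  "in_Omega n \<omega> \<longleftrightarrow> (\<forall>I. \<omega> I \<noteq> 0 \<longrightarrow> I \<subseteq> {..<n}) \<and> (\<forall>I. poly_in_vars n (\<omega> I))"

text \<open>d_j(h dx_I) = sum_l (d_l^j h) dx_l ^ dx_I\<close>
definition dop :: "nat \<Rightarrow> nat \<Rightarrow> dform \<Rightarrow> dform" where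
  "dop n j \<omega> J = (if J \<subseteq> {..<n} then
      (\<Sum>l\<in>J. wsign (J - {l}) l * (pderiv_var l ^^ j) (\<omega> (J - {l}))) else 0)"

text \<open>delta_l(h dx_I) = sum_j (d_j^l h) iota(dx_j) dx_I\<close>
definition deltaop :: "nat \<Rightarrow> nat \<Rightarrow> dform \<Rightarrow> dform" where
  "deltaop n l \<omega> J = (if J \<subseteq> {..<n} then
      (\<Sum>j\<in>{..<n} - J. wsign J j * (pderiv_var j ^^ l) (\<omega> (insert j J))) else 0)"

definition Hspace :: "nat \<Rightarrow> nat \<Rightarrow> nat \<Rightarrow> dform set" where
  "Hspace n r s = {\<omega>. in_Omega n \<omega>
      \<and> (\<forall>I. \<omega> I \<noteq> 0 \<longrightarrow> card I = s)
      \<and> (\<forall>I. Sn_harmonic n (\<omega> I) \<and> homogeneous r (\<omega> I))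
      \<and> (\<forall>j<n. deltaop n j \<omega> = (\<lambda>_. 0))}"

definition Delta :: "nat \<Rightarrow> rpoly" where
  "Delta n = (\<Prod>(i, j)\<in>{(i, j). i < j \<and> j < n}. Xv i - Xv j)"

definition Delta_form :: "nat \<Rightarrow> dform" where
  "Delta_form n I = (if I = {} then Delta n else 0)"

definition omega_form :: "nat \<Rightarrow> nat list \<Rightarrow> dform" where
  "omega_form n ms = foldr (dop n) ms (Delta_form n)"

definition mono_perm :: "(nat \<Rightarrow> nat) \<Rightarrow> mono \<Rightarrow> mono" where
  "mono_perm \<sigma> m = (\<Sum>i\<in>Poly_Mapping.keys m. Poly_Mapping.single (\<sigma> i) (Poly_Mapping.lookup m i))"

definition poly_perm :: "(nat \<Rightarrow> nat) \<Rightarrow> rpoly \<Rightarrow> rpoly" where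
  "poly_perm \<sigma> p = (\<Sum>m\<in>Poly_Mapping.keys p. Poly_Mapping.single (mono_perm \<sigma> m) (Poly_Mapping.lookup p m))"

text \<open>sign of reordering dx_(sigma i_1) ^ ... ^ dx_(sigma i_k) increasingly\<close>
definition reorder_sign :: "(nat \<Rightarrow> nat) \<Rightarrow> nat set \<Rightarrow> rpoly" where
  "reorder_sign \<sigma> I = (-1) ^ card {(a, b). a \<in> I \<and> b \<in> I \<and> a < b \<and> \<sigma> b < \<sigma> a}"

text \<open>sigma (h dx_(i_1) ^ ... ^ dx_(i_k)) = (sigma h) dx_(sigma i_1) ^ ... ^ dx_(sigma i_k)\<close>
definition form_perm :: "nat \<Rightarrow> (nat \<Rightarrow> nat) \<Rightarrow> dform \<Rightarrow> dform" where
  "form_perm n \<sigma> \<omega> J = (if J \<subseteq> {..<n} then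
      reorder_sign \<sigma> (inv \<sigma> ` J) * poly_perm \<sigma> (\<omega> (inv \<sigma> ` J)) else 0)"

end

theory Submission
  imports Defs
begin


abbreviation lk :: "('a \<Rightarrow>\<^sub>0 'b::zero) \<Rightarrow> 'a \<Rightarrow> 'b" where "lk \<equiv> Poly_Mapping.lookup"
abbreviation ks :: "('a \<Rightarrow>\<^sub>0 'b::zero) \<Rightarrow> 'a set" where "ks \<equiv> Poly_Mapping.keys"
abbreviation ev :: "nat \<Rightarrow> mono" where "ev l \<equiv> Poly_Mapping.single l 1"

lemma lk_ev[simp]: "lk (ev l) i = (if i = l then 1 else 0)"
  by (simp add: lookup_single)

lemma lk_ev'[simp]: "lk (Poly_Mapping.single l (Suc 0)) i = (if i = l then 1 else 0)"
  by (simp add: lookup_single)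

lemma mono_eq_iff: "(a::mono) = b \<longleftrightarrow> (\<forall>i. lk a i = lk b i)"
  by (simp add: poly_mapping_eq_iff fun_eq_iff)

lemma lk_minus_nat: "lk ((a::mono) - b) i = lk a i - lk b i"
  by (simp add: lookup_minus)

lemma lookup_pderiv:
  "lk (pderiv_var l p) a = real (lk a l + 1) * lk p (a + ev l)"
proof -
  have "lk (pderiv_var l p) a =
     (\<Sum>m\<in>ks p. if m = a + ev l then real (lk a l + 1) * lk p (a + ev l) else 0)"
    unfolding pderiv_var_def lookup_sum
  proof (rule sum.cong[OF refl])
    fix m assume "m \<in> ks p"
    show "lk (Poly_Mapping.single (m - ev l) (real (lk m l) * lk p m)) a =
      (if m = a + ev l then real (lk a l + 1) * lk p (a + ev l) else 0)"
    proof (cases "m = a + ev l")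
      case True
      have "m - ev l = a" using True by (auto simp: mono_eq_iff lk_minus_nat lookup_add lk_ev)
      then show ?thesis using True by (simp add: lookup_add lk_ev)
    next
      case False
      show ?thesis
      proof (cases "m - ev l = a")
        case True
        have "lk m l = 0"
        proof (rule ccontr)
          assume "lk m l \<noteq> 0"
          then have "m = a + ev l" unfolding mono_eq_iff
          proof (intro allI)
            fix i
            have "lk m i - lk (ev l) i = lk a i" using True lk_minus_nat[of m "ev l" i] by simp
            then show "lk m i = lk (a + ev l) i" using \<open>lk m l \<noteq> 0\<close>
              by (cases "i = l") (auto simp: lookup_add lk_ev)
          qed
          with False show False by simp
        qed
        then show ?thesis using False True by (simp add: lookup_single)
      next
        case False2: False
        then show ?thesis using False by (simp add: lookup_single)
      qed
    qed
  qed
  also have "\<dots> = real (lk a l + 1) * lk p (a + ev l)"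
    by (simp add: sum.delta in_keys_iff)
  finally show ?thesis .
qed

lemma pderiv_add: "pderiv_var l (p + q) = pderiv_var l p + pderiv_var l q"
  by (rule poly_mapping_eqI) (simp add: lookup_pderiv lookup_add distrib_left)

lemma pderiv_uminus: "pderiv_var l (- p) = - pderiv_var l p"
  by (rule poly_mapping_eqI) (simp add: lookup_pderiv)

lemma pderiv_diff: "pderiv_var l (p - q) = pderiv_var l p - pderiv_var l q"
  by (rule poly_mapping_eqI) (simp add: lookup_pderiv lookup_minus right_diff_distrib)

lemma pderiv_zero: "pderiv_var l 0 = 0"
  by (rule poly_mapping_eqI) (simp add: lookup_pderiv)

lemma pderiv_comm: "pderiv_var i (pderiv_var j p) = pderiv_var j (pderiv_var i p)"
proof (rule poly_mapping_eqI)
  fix a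
  show "lk (pderiv_var i (pderiv_var j p)) a = lk (pderiv_var j (pderiv_var i p)) a"
  proof (cases "i = j")
    case False
    have e: "a + Poly_Mapping.single i (Suc 0) + Poly_Mapping.single j (Suc 0) =
      a + Poly_Mapping.single j (Suc 0) + Poly_Mapping.single i (Suc 0)"
      by (metis add.assoc add.commute)
    show ?thesis using False by (simp add: lookup_pderiv lookup_add e)
  qed simp
qed

lemma fp_add: "(pderiv_var l ^^ k) (p + q) = (pderiv_var l ^^ k) p + (pderiv_var l ^^ k) q"
  by (induction k) (simp_all add: pderiv_add)

lemma fp_uminus: "(pderiv_var l ^^ k) (- p) = - (pderiv_var l ^^ k) p"
  by (induction k) (simp_all add: pderiv_uminus)

lemma fp_zero: "(pderiv_var l ^^ k) 0 = 0"
  by (induction k) (simp_all add: pderiv_zero)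

lemma fp_diff: "(pderiv_var l ^^ k) (p - q) = (pderiv_var l ^^ k) p - (pderiv_var l ^^ k) q"
  by (induction k) (simp_all add: pderiv_diff)

lemma fp_sum: "(pderiv_var l ^^ k) (sum f A) = (\<Sum>x\<in>A. (pderiv_var l ^^ k) (f x))"
  by (induction A rule: infinite_finite_induct) (simp_all add: fp_add fp_zero)

lemma minus_one_pow_mult: "((-1::rpoly) ^ c) * p = (if even c then p else - p)"
  by (simp add: minus_one_power_iff)

lemma fp_sign: "(pderiv_var l ^^ k) ((-1::rpoly) ^ c * p) = (-1) ^ c * (pderiv_var l ^^ k) p"
  by (simp add: minus_one_pow_mult fp_uminus)

lemma fp_comm1: "(pderiv_var i ^^ k) (pderiv_var j p) = pderiv_var j ((pderiv_var i ^^ k) p)"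
proof (induction k)
  case (Suc k)
  have "(pderiv_var i ^^ Suc k) (pderiv_var j p) = pderiv_var i ((pderiv_var i ^^ k) (pderiv_var j p))"
    by simp
  also have "\<dots> = pderiv_var i (pderiv_var j ((pderiv_var i ^^ k) p))" by (simp only: Suc.IH)
  also have "\<dots> = pderiv_var j (pderiv_var i ((pderiv_var i ^^ k) p))" by (rule pderiv_comm)
  finally show ?case by simp
qed simp

lemma fp_comm: "(pderiv_var i ^^ k) ((pderiv_var j ^^ m) p) = (pderiv_var j ^^ m) ((pderiv_var i ^^ k) p)"
proof (induction m)
  case (Suc m)
  have "(pderiv_var i ^^ k) ((pderiv_var j ^^ Suc m) p) = (pderiv_var i ^^ k) (pderiv_var j ((pderiv_var j ^^ m) p))"
    by simp
  also have "\<dots> = pderiv_var j ((pderiv_var i ^^ k) ((pderiv_var j ^^ m) p))" by (rule fp_comm1)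
  also have "\<dots> = pderiv_var j ((pderiv_var j ^^ m) ((pderiv_var i ^^ k) p))" by (simp only: Suc.IH)
  finally show ?case by simp
qed simp

lemma fp_fp: "(pderiv_var i ^^ k) ((pderiv_var i ^^ m) p) = (pderiv_var i ^^ (k + m)) p"
  by (simp add: funpow_add)

definition Pk :: "nat \<Rightarrow> nat \<Rightarrow> rpoly \<Rightarrow> rpoly" where
  "Pk n k f = (\<Sum>i<n. (pderiv_var i ^^ k) f)"

lemma Pk_comm: "Pk n k ((pderiv_var j ^^ m) p) = (pderiv_var j ^^ m) (Pk n k p)"
  unfolding Pk_def fp_sum by (rule sum.cong[OF refl]) (rule fp_comm)

lemma Pk_add: "Pk n k (p + q) = Pk n k p + Pk n k q"
  by (simp add: Pk_def fp_add sum.distrib)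

lemma Pk_uminus: "Pk n k (- p) = - Pk n k p"
  by (simp add: Pk_def fp_uminus sum_negf)

lemma Pk_zero: "Pk n k 0 = 0"
  by (simp add: Pk_def fp_zero)

definition Good :: "nat \<Rightarrow> rpoly \<Rightarrow> bool" where
  "Good n f \<longleftrightarrow> poly_in_vars n f \<and> (\<forall>k\<ge>1. Pk n k f = 0)"

lemma keys_pderiv: "a \<in> ks (pderiv_var l p) \<Longrightarrow> a + ev l \<in> ks p"
  by (auto simp: in_keys_iff lookup_pderiv)

lemma piv_pderiv: "poly_in_vars n p \<Longrightarrow> poly_in_vars n (pderiv_var l p)"
  unfolding poly_in_vars_def
proof (intro ballI subsetI)
  fix a i assume H: "\<forall>m\<in>ks p. ks m \<subseteq> {..<n}" "a \<in> ks (pderiv_var l p)" "i \<in> ks a"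
  have "a + ev l \<in> ks p" using keys_pderiv H(2) by blast
  moreover have "i \<in> ks (a + ev l)" using H(3) by (simp add: in_keys_iff lookup_add)
  ultimately show "i \<in> {..<n}" using H(1) by blast
qed

lemma piv_fp: "poly_in_vars n p \<Longrightarrow> poly_in_vars n ((pderiv_var l ^^ k) p)"
  by (induction k) (simp_all add: piv_pderiv)

lemma piv_add: "poly_in_vars n p \<Longrightarrow> poly_in_vars n q \<Longrightarrow> poly_in_vars n (p + q)"
  unfolding poly_in_vars_def using keys_add[of p q] by blast

lemma piv_uminus: "poly_in_vars n p \<Longrightarrow> poly_in_vars n (- p)"
  unfolding poly_in_vars_def by simp

lemma piv_zero: "poly_in_vars n 0"
  unfolding poly_in_vars_def by simp

lemma piv_sum: "(\<And>x. x \<in> A \<Longrightarrow> poly_in_vars n (f x)) \<Longrightarrow> poly_in_vars n (sum f A)"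
  by (induction A rule: infinite_finite_induct) (simp_all add: piv_add piv_zero)

lemma piv_sign: "poly_in_vars n p \<Longrightarrow> poly_in_vars n ((-1::rpoly) ^ c * p)"
  by (simp add: minus_one_pow_mult piv_uminus)

lemma Good_zero: "Good n 0" by (simp add: Good_def piv_zero Pk_zero)

lemma Good_add: "Good n p \<Longrightarrow> Good n q \<Longrightarrow> Good n (p + q)"
  by (simp add: Good_def piv_add Pk_add)

lemma Good_sign: "Good n p \<Longrightarrow> Good n ((-1::rpoly) ^ c * p)"
  by (simp add: Good_def minus_one_pow_mult piv_uminus Pk_uminus)

lemma Good_sum: "(\<And>x. x \<in> A \<Longrightarrow> Good n (f x)) \<Longrightarrow> Good n (sum f A)"
  by (induction A rule: infinite_finite_induct) (simp_all add: Good_add Good_zero)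

lemma Good_fp: "Good n p \<Longrightarrow> Good n ((pderiv_var l ^^ m) p)"
  by (simp add: Good_def piv_fp Pk_comm fp_zero)

lemma Good_harm: "Good n p \<Longrightarrow> Sn_harmonic n p"
  by (simp add: Good_def Sn_harmonic_def Pk_def)

lemma mono_deg_superset: "finite S \<Longrightarrow> ks a \<subseteq> S \<Longrightarrow> mono_deg a = (\<Sum>i\<in>S. lk a i)"
  unfolding mono_deg_def by (rule sum.mono_neutral_left) (auto simp: in_keys_iff)

lemma mono_deg_add: "mono_deg (a + b) = mono_deg a + mono_deg b"
proof -
  let ?S = "ks a \<union> ks b"
  have "ks (a + b) \<subseteq> ?S" by (rule keys_add)
  then have "mono_deg (a + b) = (\<Sum>i\<in>?S. lk (a + b) i)" by (simp add: mono_deg_superset)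
  also have "\<dots> = (\<Sum>i\<in>?S. lk a i) + (\<Sum>i\<in>?S. lk b i)" by (simp add: lookup_add sum.distrib)
  also have "\<dots> = mono_deg a + mono_deg b"
  proof -
    have A: "mono_deg a = (\<Sum>i\<in>?S. lk a i)" by (rule mono_deg_superset) auto
    have B: "mono_deg b = (\<Sum>i\<in>?S. lk b i)" by (rule mono_deg_superset) auto
    show ?thesis by (simp only: A B)
  qed
  finally show ?thesis .
qed

lemma mono_deg_ev: "mono_deg (ev l) = 1"
  by (simp add: mono_deg_def)

lemma mono_deg_ev'[simp]: "mono_deg (Poly_Mapping.single l (Suc 0)) = 1"
  by (simp add: mono_deg_def)

lemma hom_pderiv: "homogeneous r p \<Longrightarrow> homogeneous (r - 1) (pderiv_var l p)"
  unfolding homogeneous_def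
proof
  fix a assume H: "\<forall>m\<in>ks p. mono_deg m = r" "a \<in> ks (pderiv_var l p)"
  then have "mono_deg (a + ev l) = r" using keys_pderiv by blast
  then show "mono_deg a = r - 1" by (simp add: mono_deg_add mono_deg_ev)
qed

lemma hom_fp: "homogeneous r p \<Longrightarrow> homogeneous (r - k) ((pderiv_var l ^^ k) p)"
proof (induction k)
  case (Suc k)
  have "homogeneous (r - k - 1) (pderiv_var l ((pderiv_var l ^^ k) p))"
    by (rule hom_pderiv) (rule Suc.IH[OF Suc.prems])
  then show ?case by simp
qed simp

lemma hom_fp_keys: "homogeneous r p \<Longrightarrow> a \<in> ks ((pderiv_var l ^^ k) p) \<Longrightarrow> mono_deg a + k = r"
proof (induction k arbitrary: a)
  case 0
  then show ?case by (simp add: homogeneous_def)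
next
  case (Suc k)
  have "a \<in> ks (pderiv_var l ((pderiv_var l ^^ k) p))" using Suc.prems(2) by simp
  then have "a + ev l \<in> ks ((pderiv_var l ^^ k) p)" by (rule keys_pderiv)
  then have "mono_deg (a + ev l) + k = r" using Suc.IH Suc.prems(1) by blast
  then show ?case by (simp add: mono_deg_add mono_deg_ev)
qed

lemma hom_add: "homogeneous r p \<Longrightarrow> homogeneous r q \<Longrightarrow> homogeneous r (p + q)"
  unfolding homogeneous_def using keys_add[of p q] by blast

lemma hom_zero: "homogeneous r 0"
  unfolding homogeneous_def by simp

lemma hom_sign: "homogeneous r p \<Longrightarrow> homogeneous r ((-1::rpoly) ^ c * p)"
  unfolding homogeneous_def by (simp add: minus_one_pow_mult)

lemma hom_sum: "(\<And>x. x \<in> A \<Longrightarrow> homogeneous r (f x)) \<Longrightarrow> homogeneous r (sum f A)"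
  by (induction A rule: infinite_finite_induct) (simp_all add: hom_add hom_zero)


lemma card_lt_insert:
  assumes "finite S" "x \<notin> S"
  shows "card {y\<in>insert x S. y < (z::nat)} = card {y\<in>S. y < z} + (if x < z then 1 else 0)"
proof (cases "x < z")
  case True
  then have "{y\<in>insert x S. y < z} = insert x {y\<in>S. y < z}" by auto
  then show ?thesis using assms True by simp
next
  case False
  then have "{y\<in>insert x S. y < z} = {y\<in>S. y < z}" by auto
  then show ?thesis using False by simp
qed

lemma ws_sq: "wsign S x * (wsign S x * p) = p"
  by (simp add: wsign_def minus_one_pow_mult)

lemma fp_ws: "(pderiv_var i ^^ k) (wsign S x * p) = wsign S x * (pderiv_var i ^^ k) p"
  by (simp add: wsign_def fp_sign)

lemma ws_swap:
  assumes "finite J" "i \<in> J" "j \<notin> J"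
  shows "wsign J j * wsign (insert j J - {i}) i = - (wsign (J - {i}) i * wsign (J - {i}) j)"
proof -
  have ij: "i \<noteq> j" using assms by auto
  have J: "J = insert i (J - {i})" using assms by auto
  have c1: "card {y\<in>J. y < j} = card {y\<in>J - {i}. y < j} + (if i < j then 1 else 0)"
    by (subst J, rule card_lt_insert) (use assms in auto)
  have e2: "insert j J - {i} = insert j (J - {i})" using ij by auto
  have c2: "card {y\<in>insert j J - {i}. y < i} = card {y\<in>J - {i}. y < i} + (if j < i then 1 else 0)"
    unfolding e2 by (rule card_lt_insert) (use assms in auto)
  have "card {y\<in>J. y < j} + card {y\<in>insert j J - {i}. y < i} =
      Suc (card {y\<in>J - {i}. y < i} + card {y\<in>J - {i}. y < j})"
    using c1 c2 ij by auto
  then show ?thesis unfolding wsign_def power_add[symmetric] by simp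
qed

lemma dd_comm:
  assumes J: "J \<subseteq> {..<n}"
  shows "deltaop n l (dop n m \<omega>) J + dop n m (deltaop n l \<omega>) J = Pk n (l + m) (\<omega> J)"
proof -
  define A where "A = {..<n} - J"
  have fJ: "finite J" using J finite_subset by blast
  have fA: "finite A" unfolding A_def by simp
  define T1 where "T1 j i = wsign J j * (wsign (insert j J - {i}) i *
      (pderiv_var j ^^ l) ((pderiv_var i ^^ m) (\<omega> (insert j (J - {i})))))" for j i
  define T2 where "T2 i j = wsign (J - {i}) i * (wsign (J - {i}) j *
      (pderiv_var i ^^ m) ((pderiv_var j ^^ l) (\<omega> (insert j (J - {i})))))" for i j
  have L: "deltaop n l (dop n m \<omega>) J =
     (\<Sum>j\<in>A. (pderiv_var j ^^ (l + m)) (\<omega> J)) + (\<Sum>j\<in>A. \<Sum>i\<in>J. T1 j i)"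
  proof -
    have "deltaop n l (dop n m \<omega>) J = (\<Sum>j\<in>A. wsign J j * (pderiv_var j ^^ l) (dop n m \<omega> (insert j J)))"
      using J by (simp add: deltaop_def A_def)
    also have "\<dots> = (\<Sum>j\<in>A. (pderiv_var j ^^ (l + m)) (\<omega> J) + (\<Sum>i\<in>J. T1 j i))"
    proof (rule sum.cong[OF refl])
      fix j assume jA: "j \<in> A"
      then have jJ: "j \<notin> J" and jn: "j < n" by (auto simp: A_def)
      have "dop n m \<omega> (insert j J) = (\<Sum>i\<in>insert j J. wsign (insert j J - {i}) i * (pderiv_var i ^^ m) (\<omega> (insert j J - {i})))"
        using J jn by (simp add: dop_def)
      also have "\<dots> = wsign J j * (pderiv_var j ^^ m) (\<omega> J) +
          (\<Sum>i\<in>J. wsign (insert j J - {i}) i * (pderiv_var i ^^ m) (\<omega> (insert j (J - {i}))))"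
      proof -
        have e: "insert j J - {j} = J" using jJ by auto
        have "(\<Sum>i\<in>J. wsign (insert j J - {i}) i * (pderiv_var i ^^ m) (\<omega> (insert j J - {i}))) =
          (\<Sum>i\<in>J. wsign (insert j J - {i}) i * (pderiv_var i ^^ m) (\<omega> (insert j (J - {i}))))"
          by (rule sum.cong[OF refl]) (use jJ in \<open>metis insert_Diff_if singletonD\<close>)
        then show ?thesis using fJ jJ by (simp add: e)
      qed
      finally have "wsign J j * (pderiv_var j ^^ l) (dop n m \<omega> (insert j J)) =
         wsign J j * (pderiv_var j ^^ l) (wsign J j * (pderiv_var j ^^ m) (\<omega> J) +
          (\<Sum>i\<in>J. wsign (insert j J - {i}) i * (pderiv_var i ^^ m) (\<omega> (insert j (J - {i})))))"
        by simp
      also have "\<dots> = (pderiv_var j ^^ (l + m)) (\<omega> J) + (\<Sum>i\<in>J. T1 j i)"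
        by (simp add: fp_add fp_sum fp_ws ws_sq distrib_left sum_distrib_left T1_def fp_fp)
      finally show "wsign J j * (pderiv_var j ^^ l) (dop n m \<omega> (insert j J)) =
         (pderiv_var j ^^ (l + m)) (\<omega> J) + (\<Sum>i\<in>J. T1 j i)" .
    qed
    finally show ?thesis by (simp add: sum.distrib)
  qed
  have R: "dop n m (deltaop n l \<omega>) J =
     (\<Sum>i\<in>J. (pderiv_var i ^^ (l + m)) (\<omega> J)) + (\<Sum>i\<in>J. \<Sum>j\<in>A. T2 i j)"
  proof -
    have "dop n m (deltaop n l \<omega>) J = (\<Sum>i\<in>J. wsign (J - {i}) i * (pderiv_var i ^^ m) (deltaop n l \<omega> (J - {i})))"
      using J by (simp add: dop_def)
    also have "\<dots> = (\<Sum>i\<in>J. (pderiv_var i ^^ (l + m)) (\<omega> J) + (\<Sum>j\<in>A. T2 i j))"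
    proof (rule sum.cong[OF refl])
      fix i assume iJ: "i \<in> J"
      have sub: "J - {i} \<subseteq> {..<n}" using J by auto
      have e1: "{..<n} - (J - {i}) = insert i A" using iJ J by (auto simp: A_def)
      have iA: "i \<notin> A" using iJ by (simp add: A_def)
      have e2: "insert i (J - {i}) = J" using iJ by auto
      have "deltaop n l \<omega> (J - {i}) = (\<Sum>j\<in>insert i A. wsign (J - {i}) j * (pderiv_var j ^^ l) (\<omega> (insert j (J - {i}))))"
        using sub by (simp add: deltaop_def e1)
      also have "\<dots> = wsign (J - {i}) i * (pderiv_var i ^^ l) (\<omega> J) +
          (\<Sum>j\<in>A. wsign (J - {i}) j * (pderiv_var j ^^ l) (\<omega> (insert j (J - {i}))))"
        using fA iA iJ by (simp add: e2 insert_absorb)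
      finally have "wsign (J - {i}) i * (pderiv_var i ^^ m) (deltaop n l \<omega> (J - {i})) =
          wsign (J - {i}) i * (pderiv_var i ^^ m) (wsign (J - {i}) i * (pderiv_var i ^^ l) (\<omega> J) +
          (\<Sum>j\<in>A. wsign (J - {i}) j * (pderiv_var j ^^ l) (\<omega> (insert j (J - {i})))))"
        by simp
      also have "\<dots> = (pderiv_var i ^^ (m + l)) (\<omega> J) + (\<Sum>j\<in>A. T2 i j)"
        by (simp add: fp_add fp_sum fp_ws ws_sq distrib_left sum_distrib_left T2_def fp_fp)
      finally show "wsign (J - {i}) i * (pderiv_var i ^^ m) (deltaop n l \<omega> (J - {i})) =
          (pderiv_var i ^^ (l + m)) (\<omega> J) + (\<Sum>j\<in>A. T2 i j)" by (simp add: add.commute)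
    qed
    finally show ?thesis by (simp add: sum.distrib)
  qed
  have T: "T1 j i + T2 i j = 0" if "i \<in> J" "j \<in> A" for i j
  proof -
    have jJ: "j \<notin> J" using that by (simp add: A_def)
    have s: "wsign J j * wsign (insert j J - {i}) i = - (wsign (J - {i}) i * wsign (J - {i}) j)"
      by (rule ws_swap) (use fJ that jJ in auto)
    have d: "(pderiv_var j ^^ l) ((pderiv_var i ^^ m) (\<omega> (insert j (J - {i})))) =
        (pderiv_var i ^^ m) ((pderiv_var j ^^ l) (\<omega> (insert j (J - {i}))))"
      by (rule fp_comm)
    show ?thesis unfolding T1_def T2_def mult.assoc[symmetric] s d by simp
  qed
  have "(\<Sum>j\<in>A. \<Sum>i\<in>J. T1 j i) + (\<Sum>i\<in>J. \<Sum>j\<in>A. T2 i j) = (\<Sum>i\<in>J. \<Sum>j\<in>A. T1 j i + T2 i j)"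
    by (simp add: sum.distrib sum.swap[of _ A J])
  also have "\<dots> = 0" using T by simp
  finally have Z: "(\<Sum>j\<in>A. \<Sum>i\<in>J. T1 j i) + (\<Sum>i\<in>J. \<Sum>j\<in>A. T2 i j) = 0" .
  have U: "(\<Sum>j\<in>A. (pderiv_var j ^^ (l + m)) (\<omega> J)) + (\<Sum>i\<in>J. (pderiv_var i ^^ (l + m)) (\<omega> J)) =
      Pk n (l + m) (\<omega> J)"
  proof -
    have "{..<n} = A \<union> J" "A \<inter> J = {}" using J by (auto simp: A_def)
    then show ?thesis unfolding Pk_def using fA fJ by (simp add: sum.union_disjoint)
  qed
  show ?thesis unfolding L R using Z U by (simp add: algebra_simps)
qed


lemma lk_single_if: "lk (Poly_Mapping.single k v) k' = (if k = k' then v else 0)"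
  by (simp add: lookup_single)

lemma lk_mono_perm: "bij \<sigma> \<Longrightarrow> lk (mono_perm \<sigma> m) j = lk m (inv \<sigma> j)"
proof -
  assume b: "bij \<sigma>"
  have "lk (mono_perm \<sigma> m) j = (\<Sum>i\<in>ks m. if i = inv \<sigma> j then lk m i else 0)"
    unfolding mono_perm_def lookup_sum lk_single_if
    by (rule sum.cong[OF refl]) (use b in \<open>auto simp: bij_inv_eq_iff\<close>)
  also have "\<dots> = lk m (inv \<sigma> j)" by (simp add: in_keys_iff)
  finally show ?thesis .
qed

lemma lk_mono_perm_inv: "bij \<sigma> \<Longrightarrow> lk (mono_perm (inv \<sigma>) m) j = lk m (\<sigma> j)"
  by (simp add: lk_mono_perm bij_imp_bij_inv inv_inv_eq)

lemma bij_inv_f: "bij \<sigma> \<Longrightarrow> inv \<sigma> (\<sigma> x) = x"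
  by (simp add: bij_is_inj)

lemma bij_f_inv: "bij \<sigma> \<Longrightarrow> \<sigma> (inv \<sigma> x) = x"
  by (simp add: bij_is_surj surj_f_inv_f)

lemma mono_perm_inv1: "bij \<sigma> \<Longrightarrow> mono_perm \<sigma> (mono_perm (inv \<sigma>) b) = b"
  by (simp add: mono_eq_iff lk_mono_perm lk_mono_perm_inv bij_inv_f bij_f_inv)

lemma mono_perm_inv2: "bij \<sigma> \<Longrightarrow> mono_perm (inv \<sigma>) (mono_perm \<sigma> a) = a"
  by (simp add: mono_eq_iff lk_mono_perm lk_mono_perm_inv bij_inv_f bij_f_inv)

lemma mono_perm_add: "bij \<sigma> \<Longrightarrow> mono_perm \<sigma> (a + b) = mono_perm \<sigma> a + mono_perm \<sigma> b"
  by (simp add: mono_eq_iff lk_mono_perm lookup_add)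

lemma mono_perm_single: "bij \<sigma> \<Longrightarrow> mono_perm \<sigma> (Poly_Mapping.single i k) = Poly_Mapping.single (\<sigma> i) k"
  by (auto simp add: mono_eq_iff lk_mono_perm lk_single_if bij_inv_eq_iff)

lemma mono_perm_eq_iff: "bij \<sigma> \<Longrightarrow> mono_perm \<sigma> m = b \<longleftrightarrow> m = mono_perm (inv \<sigma>) b"
  using mono_perm_inv1[of \<sigma> b] mono_perm_inv2[of \<sigma> m] by auto

lemma mono_perm_zero: "bij \<sigma> \<Longrightarrow> mono_perm \<sigma> 0 = 0"
  by (simp add: mono_eq_iff lk_mono_perm)

lemma lk_poly_perm: "bij \<sigma> \<Longrightarrow> lk (poly_perm \<sigma> p) b = lk p (mono_perm (inv \<sigma>) b)"
proof -
  assume bs: "bij \<sigma>"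
  have "lk (poly_perm \<sigma> p) b = (\<Sum>m\<in>ks p. if m = mono_perm (inv \<sigma>) b then lk p m else 0)"
    unfolding poly_perm_def lookup_sum lk_single_if
    by (rule sum.cong[OF refl]) (simp add: lk_single_if mono_perm_eq_iff[OF bs])
  also have "\<dots> = lk p (mono_perm (inv \<sigma>) b)" by (simp add: in_keys_iff)
  finally show ?thesis .
qed

lemma pp_add: "bij \<sigma> \<Longrightarrow> poly_perm \<sigma> (p + q) = poly_perm \<sigma> p + poly_perm \<sigma> q"
  by (rule poly_mapping_eqI) (simp add: lk_poly_perm lookup_add)

lemma pp_uminus: "bij \<sigma> \<Longrightarrow> poly_perm \<sigma> (- p) = - poly_perm \<sigma> p"
  by (rule poly_mapping_eqI) (simp add: lk_poly_perm)

lemma pp_diff: "bij \<sigma> \<Longrightarrow> poly_perm \<sigma> (p - q) = poly_perm \<sigma> p - poly_perm \<sigma> q"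
  by (rule poly_mapping_eqI) (simp add: lk_poly_perm lookup_minus)

lemma pp_zero: "bij \<sigma> \<Longrightarrow> poly_perm \<sigma> 0 = 0"
  by (rule poly_mapping_eqI) (simp add: lk_poly_perm)

lemma pp_sum: "bij \<sigma> \<Longrightarrow> poly_perm \<sigma> (sum f A) = (\<Sum>x\<in>A. poly_perm \<sigma> (f x))"
  by (induction A rule: infinite_finite_induct) (simp_all add: pp_add pp_zero)

lemma pp_sign: "bij \<sigma> \<Longrightarrow> poly_perm \<sigma> ((-1::rpoly) ^ c * p) = (-1) ^ c * poly_perm \<sigma> p"
  by (simp add: minus_one_pow_mult pp_uminus)

lemma pp_one: "bij \<sigma> \<Longrightarrow> poly_perm \<sigma> 1 = 1"
proof (rule poly_mapping_eqI)
  fix b assume bs: "bij \<sigma>"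
  have "mono_perm (inv \<sigma>) b = 0 \<longleftrightarrow> b = 0"
    using mono_perm_eq_iff[OF bs, of 0 b] mono_perm_zero[OF bs] by auto
  then show "lk (poly_perm \<sigma> 1) b = lk 1 b" using bs by (simp add: lk_poly_perm lookup_one when_def)
qed

lemma bij_mono_perm: "bij \<sigma> \<Longrightarrow> bij (mono_perm \<sigma>)"
  by (rule o_bij[of "mono_perm (inv \<sigma>)"]) (simp_all add: fun_eq_iff mono_perm_inv1 mono_perm_inv2)

lemma pp_mult: "bij \<sigma> \<Longrightarrow> poly_perm \<sigma> (p * q) = poly_perm \<sigma> p * poly_perm \<sigma> q"
proof (rule poly_mapping_eqI)
  fix b assume bs: "bij \<sigma>"
  define \<psi> where "\<psi> = mono_perm (inv \<sigma>)"
  have bi: "bij (inv \<sigma>)" using bs by (rule bij_imp_bij_inv)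
  have bp: "bij \<psi>" unfolding \<psi>_def using bi by (rule bij_mono_perm)
  have add: "\<psi> (x + y) = \<psi> x + \<psi> y" for x y unfolding \<psi>_def using bi by (rule mono_perm_add)
  have injp: "\<psi> x = \<psi> y \<longleftrightarrow> x = y" for x y using bp by (meson bij_is_inj injD)
  have inner: "Sum_any (\<lambda>q'. lk (poly_perm \<sigma> q) q' when b = l + q') = Sum_any (\<lambda>q'. lk q q' when \<psi> b = \<psi> l + q')" for l
  proof -
    have "Sum_any (\<lambda>q'. lk q q' when \<psi> b = \<psi> l + q') = Sum_any (\<lambda>q'. lk q (\<psi> q') when \<psi> b = \<psi> l + \<psi> q')"
      by (rule Sum_any.reindex_cong[OF bp]) (simp add: fun_eq_iff)
    also have "\<dots> = Sum_any (\<lambda>q'. lk q (\<psi> q') when b = l + q')"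
      by (simp only: add[symmetric] injp)
    also have "\<dots> = Sum_any (\<lambda>q'. lk (poly_perm \<sigma> q) q' when b = l + q')"
      by (simp add: lk_poly_perm bs \<psi>_def)
    finally show ?thesis by simp
  qed
  have "lk (poly_perm \<sigma> p * poly_perm \<sigma> q) b =
      Sum_any (\<lambda>l. lk (poly_perm \<sigma> p) l * Sum_any (\<lambda>q'. lk (poly_perm \<sigma> q) q' when b = l + q'))"
    by (rule lookup_mult)
  also have "\<dots> = Sum_any (\<lambda>l. lk p (\<psi> l) * Sum_any (\<lambda>q'. lk q q' when \<psi> b = \<psi> l + q'))"
    unfolding inner by (simp add: lk_poly_perm bs \<psi>_def)
  also have "\<dots> = Sum_any (\<lambda>l. lk p l * Sum_any (\<lambda>q'. lk q q' when \<psi> b = l + q'))"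
    by (rule Sum_any.reindex_cong[OF bp, symmetric]) (simp add: fun_eq_iff)
  also have "\<dots> = lk (poly_perm \<sigma> (p * q)) b"
    by (simp add: lookup_mult lk_poly_perm bs \<psi>_def)
  finally show "lk (poly_perm \<sigma> (p * q)) b = lk (poly_perm \<sigma> p * poly_perm \<sigma> q) b" by simp
qed

lemma pp_prod: "bij \<sigma> \<Longrightarrow> poly_perm \<sigma> (prod f A) = (\<Prod>x\<in>A. poly_perm \<sigma> (f x))"
  by (induction A rule: infinite_finite_induct) (simp_all add: pp_mult pp_one)

lemma pp_Xv: "bij \<sigma> \<Longrightarrow> poly_perm \<sigma> (Xv i) = Xv (\<sigma> i)"
proof (rule poly_mapping_eqI)
  fix b assume bs: "bij \<sigma>"
  have h1: "mono_perm \<sigma> (Poly_Mapping.single i 1) = Poly_Mapping.single (\<sigma> i) 1"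
    using bs by (rule mono_perm_single)
  have "mono_perm (inv \<sigma>) b = Poly_Mapping.single i 1 \<longleftrightarrow> b = Poly_Mapping.single (\<sigma> i) 1"
    using mono_perm_eq_iff[OF bs, of "Poly_Mapping.single i 1" b] h1 by auto
  then show "lk (poly_perm \<sigma> (Xv i)) b = lk (Xv (\<sigma> i)) b"
    using bs by (simp add: Xv_def lk_poly_perm lk_single_if eq_commute[of "Poly_Mapping.single _ _"])
qed

lemma pp_pderiv: "bij \<sigma> \<Longrightarrow> poly_perm \<sigma> (pderiv_var l p) = pderiv_var (\<sigma> l) (poly_perm \<sigma> p)"
proof (rule poly_mapping_eqI)
  fix b assume bs: "bij \<sigma>"
  have bi: "bij (inv \<sigma>)" using bs by (rule bij_imp_bij_inv)
  have e: "mono_perm (inv \<sigma>) (b + ev (\<sigma> l)) = mono_perm (inv \<sigma>) b + ev l"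
    using bi bs by (simp add: mono_perm_add mono_perm_single bij_inv_f)
  show "lk (poly_perm \<sigma> (pderiv_var l p)) b = lk (pderiv_var (\<sigma> l) (poly_perm \<sigma> p)) b"
    using bs by (simp add: lk_poly_perm lookup_pderiv lk_mono_perm_inv e[simplified])
qed

lemma pp_fp: "bij \<sigma> \<Longrightarrow> poly_perm \<sigma> ((pderiv_var l ^^ k) p) = (pderiv_var (\<sigma> l) ^^ k) (poly_perm \<sigma> p)"
  by (induction k) (simp_all add: pp_pderiv)

lemma pp_comp: "bij \<sigma> \<Longrightarrow> bij \<tau> \<Longrightarrow> poly_perm (\<sigma> \<circ> \<tau>) p = poly_perm \<sigma> (poly_perm \<tau> p)"
proof (rule poly_mapping_eqI)
  fix b assume bs: "bij \<sigma>" and bt: "bij \<tau>"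
  have bst: "bij (\<sigma> \<circ> \<tau>)" using bt bs by (rule bij_comp)
  have "mono_perm (inv (\<sigma> \<circ> \<tau>)) b = mono_perm (inv \<tau>) (mono_perm (inv \<sigma>) b)"
    using bs bt bst by (simp add: mono_eq_iff lk_mono_perm_inv)
  then show "lk (poly_perm (\<sigma> \<circ> \<tau>) p) b = lk (poly_perm \<sigma> (poly_perm \<tau> p)) b"
    using bs bt bst by (simp add: lk_poly_perm)
qed

lemma mono_perm_id: "mono_perm id k = k"
  using lk_mono_perm[of id k] by (simp add: mono_eq_iff)

lemma pp_id: "poly_perm id p = p"
  by (rule poly_mapping_eqI) (simp add: lk_poly_perm mono_perm_id)


definition Pairs :: "nat \<Rightarrow> (nat \<times> nat) set" where
  "Pairs n = {(i, j). i < j \<and> j < n}"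

lemma finite_Pairs: "finite (Pairs n)"
  by (rule finite_subset[of _ "{..<n} \<times> {..<n}"]) (auto simp: Pairs_def)

lemma Delta_Pairs: "Delta n = (\<Prod>(i, j)\<in>Pairs n. Xv i - Xv j)"
  by (simp add: Delta_def Pairs_def)

lemma card_Pairs: "card (Pairs n) = n choose 2"
proof (induction n)
  case 0
  then show ?case by (simp add: Pairs_def)
next
  case (Suc n)
  have e: "Pairs (Suc n) = Pairs n \<union> (\<lambda>i. (i, n)) ` {..<n}"
    by (auto simp: Pairs_def less_Suc_eq)
  have d: "Pairs n \<inter> (\<lambda>i. (i, n)) ` {..<n} = {}" by (auto simp: Pairs_def)
  have "card (Pairs (Suc n)) = card (Pairs n) + card ((\<lambda>i. (i, n)) ` {..<n})"
    unfolding e by (rule card_Un_disjoint) (use finite_Pairs d in auto)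
  also have "card ((\<lambda>i. (i, n)) ` {..<n}) = n" by (simp add: card_image inj_on_def)
  finally show ?case using Suc by (simp add: numeral_2_eq_2)
qed

lemma piv_mult: "poly_in_vars n p \<Longrightarrow> poly_in_vars n q \<Longrightarrow> poly_in_vars n (p * q)"
  unfolding poly_in_vars_def
proof
  fix c assume H: "\<forall>m\<in>ks p. ks m \<subseteq> {..<n}" "\<forall>m\<in>ks q. ks m \<subseteq> {..<n}" "c \<in> ks (p * q)"
  then obtain a b where "c = a + b" "a \<in> ks p" "b \<in> ks q" using keys_mult[of p q] by blast
  then show "ks c \<subseteq> {..<n}" using H keys_add[of a b] by blast
qed

lemma piv_one: "poly_in_vars n 1"
  unfolding poly_in_vars_def by simp

lemma piv_prod: "(\<And>x. x \<in> A \<Longrightarrow> poly_in_vars n (f x)) \<Longrightarrow> poly_in_vars n (prod f A)"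
  by (induction A rule: infinite_finite_induct) (simp_all add: piv_mult piv_one)

lemma piv_Xv: "i < n \<Longrightarrow> poly_in_vars n (Xv i)"
  by (simp add: poly_in_vars_def Xv_def)

lemma piv_diff: "poly_in_vars n p \<Longrightarrow> poly_in_vars n q \<Longrightarrow> poly_in_vars n (p - q)"
  unfolding poly_in_vars_def using keys_diff[of p q] by blast

lemma piv_Delta: "poly_in_vars n (Delta n)"
  unfolding Delta_Pairs
  by (rule piv_prod) (auto simp: Pairs_def intro!: piv_diff piv_Xv)

lemma hom_mult: "homogeneous r p \<Longrightarrow> homogeneous s q \<Longrightarrow> homogeneous (r + s) (p * q)"
  unfolding homogeneous_def
proof
  fix c assume H: "\<forall>m\<in>ks p. mono_deg m = r" "\<forall>m\<in>ks q. mono_deg m = s" "c \<in> ks (p * q)"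
  then obtain a b where "c = a + b" "a \<in> ks p" "b \<in> ks q" using keys_mult[of p q] by blast
  then show "mono_deg c = r + s" using H by (simp add: mono_deg_add)
qed

lemma hom_one: "homogeneous 0 1"
  unfolding homogeneous_def by (simp add: mono_deg_def)

lemma hom_prod: "finite A \<Longrightarrow> (\<And>x. x \<in> A \<Longrightarrow> homogeneous 1 (f x)) \<Longrightarrow> homogeneous (card A) (prod f A)"
proof (induction A rule: finite_induct)
  case empty
  then show ?case by (simp add: hom_one)
next
  case (insert x F)
  then show ?case using hom_mult[of 1 "f x" "card F" "prod f F"] by simp
qed

lemma hom_Xv: "homogeneous 1 (Xv i)"
  by (simp add: homogeneous_def Xv_def mono_deg_ev)

lemma hom_Xv': "homogeneous (Suc 0) (Xv i)"
  using hom_Xv by simp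

lemma hom_diff: "homogeneous r p \<Longrightarrow> homogeneous r q \<Longrightarrow> homogeneous r (p - q)"
  unfolding homogeneous_def using keys_diff[of p q] by blast

lemma Delta_hom: "homogeneous (n choose 2) (Delta n)"
  unfolding Delta_Pairs card_Pairs[symmetric]
  by (rule hom_prod) (auto simp: finite_Pairs intro!: hom_diff hom_Xv')

lemma prod_sign_if: "finite A \<Longrightarrow> (\<Prod>x\<in>A. if Q x then - 1 else (1::rpoly)) = (-1) ^ card {x\<in>A. Q x}"
proof (induction A rule: finite_induct)
  case (insert x F)
  show ?case
  proof (cases "Q x")
    case True
    then have e: "{y\<in>insert x F. Q y} = insert x {y\<in>F. Q y}" by auto
    have "card (insert x {y\<in>F. Q y}) = Suc (card {y\<in>F. Q y})"
      using insert(1,2) by simp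
    then show ?thesis using insert(1,2,3) True unfolding e by simp
  next
    case False
    then have e: "{y\<in>insert x F. Q y} = {y\<in>F. Q y}" by auto
    then show ?thesis using insert(1,2,3) False unfolding e by simp
  qed
qed simp

lemma Delta_perm_inv:
  assumes "\<sigma> permutes {..<n}"
  shows "poly_perm \<sigma> (Delta n) = (-1) ^ card {x\<in>Pairs n. \<sigma> (snd x) < \<sigma> (fst x)} * Delta n"
proof -
  have bs: "bij \<sigma>" using assms by (rule permutes_bij)
  have inj: "\<sigma> x = \<sigma> y \<longleftrightarrow> x = y" for x y using bs by (meson bij_is_inj injD)
  have sn: "x < n \<Longrightarrow> \<sigma> x < n" for x using permutes_in_image[OF assms, of x] by simp
  define g where "g = (\<lambda>(i, j). if \<sigma> i < \<sigma> j then (\<sigma> i, \<sigma> j) else (\<sigma> j, \<sigma> i))"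
  have gP: "g ` Pairs n \<subseteq> Pairs n"
    using inj by (auto simp: g_def Pairs_def sn split: if_splits) (metis inj less_irrefl linorder_neqE_nat)
  have ginj: "inj_on g (Pairs n)"
  proof (rule inj_onI)
    fix x y assume "x \<in> Pairs n" "y \<in> Pairs n" "g x = g y"
    then show "x = y" using inj
      by (cases x; cases y) (auto simp: g_def Pairs_def split: if_splits)
  qed
  have gb: "bij_betw g (Pairs n) (Pairs n)"
    unfolding bij_betw_def using ginj endo_inj_surj[OF finite_Pairs gP ginj] by simp
  define F where "F = (\<lambda>(i, j). Xv i - Xv j)"
  have pt: "poly_perm \<sigma> (F x) = (if (case x of (i, j) \<Rightarrow> \<sigma> j < \<sigma> i) then -1 else 1) * F (g x)"
    if "x \<in> Pairs n" for x
    using that inj by (cases x) (auto simp: F_def g_def pp_diff pp_Xv bs Pairs_def)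
  have "poly_perm \<sigma> (Delta n) = (\<Prod>x\<in>Pairs n. poly_perm \<sigma> (F x))"
    unfolding Delta_Pairs F_def[symmetric] by (simp add: pp_prod bs)
  also have "\<dots> = (\<Prod>x\<in>Pairs n. (if (case x of (i, j) \<Rightarrow> \<sigma> j < \<sigma> i) then -1 else 1)) *
      (\<Prod>x\<in>Pairs n. F (g x))"
    by (simp add: pt prod.distrib)
  also have "(\<Prod>x\<in>Pairs n. F (g x)) = Delta n"
    unfolding Delta_Pairs F_def[symmetric] using prod.reindex_bij_betw[OF gb, of F] by simp
  also have "(\<Prod>x\<in>Pairs n. (if (case x of (i, j) \<Rightarrow> \<sigma> j < \<sigma> i) then -1 else (1::rpoly))) =
      (-1) ^ card {x\<in>Pairs n. \<sigma> (snd x) < \<sigma> (fst x)}"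
    using prod_sign_if[OF finite_Pairs, of "\<lambda>x. case x of (i, j) \<Rightarrow> \<sigma> j < \<sigma> i"]
    by (simp add: case_prod_beta)
  finally show ?thesis .
qed


lemma transp_inv_set:
  assumes ab: "a < b" "b < n"
  shows "{x\<in>Pairs n. transpose a b (snd x) < transpose a b (fst x)} =
    insert (a, b) ((\<lambda>c. (a, c)) ` {a<..<b} \<union> (\<lambda>c. (c, b)) ` {a<..<b})"
proof (intro equalityI subsetI)
  fix x assume x: "x \<in> {x\<in>Pairs n. transpose a b (snd x) < transpose a b (fst x)}"
  obtain i j where xe: "x = (i, j)" by (cases x)
  have ij: "i < j" "j < n" "transpose a b j < transpose a b i" using x xe by (auto simp: Pairs_def)
  show "x \<in> insert (a, b) ((\<lambda>c. (a, c)) ` {a<..<b} \<union> (\<lambda>c. (c, b)) ` {a<..<b})"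
  proof (cases "i = a")
    case True
    then show ?thesis using ij ab xe by (cases "j = b") (auto simp: transpose_def split: if_splits)
  next
    case ia: False
    show ?thesis
    proof (cases "i = b")
      case True
      then show ?thesis using ij ab xe by (auto simp: transpose_def split: if_splits)
    next
      case ib: False
      then show ?thesis using ia ij ab xe by (auto simp: transpose_def split: if_splits)
    qed
  qed
next
  fix x assume "x \<in> insert (a, b) ((\<lambda>c. (a, c)) ` {a<..<b} \<union> (\<lambda>c. (c, b)) ` {a<..<b})"
  then show "x \<in> {x\<in>Pairs n. transpose a b (snd x) < transpose a b (fst x)}"
    using ab by (auto simp: Pairs_def transpose_def)
qed

lemma transp_inv_card:
  assumes ab: "a < b" "b < n"
  shows "odd (card {x\<in>Pairs n. transpose a b (snd x) < transpose a b (fst x)})"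
proof -
  let ?A = "(\<lambda>c. (a, c)) ` {a<..<b}" and ?B = "(\<lambda>c. (c, b)) ` {a<..<b}"
  have cA: "card ?A = b - Suc a" by (simp add: card_image inj_on_def)
  have cB: "card ?B = b - Suc a" by (simp add: card_image inj_on_def)
  have d: "?A \<inter> ?B = {}" by auto
  have cU: "card (?A \<union> ?B) = 2 * (b - Suc a)" using card_Un_disjoint[of ?A ?B] d cA cB by simp
  have nin: "(a, b) \<notin> ?A \<union> ?B" by auto
  have "card (insert (a, b) (?A \<union> ?B)) = Suc (2 * (b - Suc a))" using nin cU by simp
  then show ?thesis unfolding transp_inv_set[OF ab] by simp
qed

lemma Delta_transp:
  assumes "a < n" "b < n" "a \<noteq> b"
  shows "poly_perm (transpose a b) (Delta n) = - Delta n"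
proof -
  have w: "\<exists>a' b'. a' < b' \<and> b' < n \<and> transpose a b = transpose a' b'"
  proof (cases "a < b")
    case True then show ?thesis using assms by blast
  next
    case False then have "b < a" using assms by simp
    then show ?thesis using assms by (metis transpose_commute)
  qed
  then obtain a' b' where ab: "a' < b'" "b' < n" and e: "transpose a b = transpose a' b'" by blast
  have p: "transpose a' b' permutes {..<n}" using ab by (intro permutes_swap_id) auto
  show ?thesis unfolding e Delta_perm_inv[OF p]
    using transp_inv_card[OF ab] by (simp add: minus_one_power_iff)
qed

lemma Delta_sign:
  assumes "\<sigma> permutes {..<n}"
  shows "poly_perm \<sigma> (Delta n) = of_int (sign \<sigma>) * Delta n"
  using assms finite_lessThan[of n]
proof (induction rule: permutes_induct)
  case id
  then show ?case using pp_id[of "Delta n"] by (simp add: id_def)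
next
  case (swap a b p)
  have pperm: "p permutes {..<n}" and IH: "poly_perm p (Delta n) = of_int (sign p) * Delta n"
    and an: "a < n" and bn: "b < n" and abne: "a \<noteq> b" using swap by auto
  have bp: "bij p" using pperm by (rule permutes_bij)
  have pp: "permutation p" using pperm by (rule permutes_imp_permutation[rotated]) simp
  have sc: "sign (transpose a b \<circ> p) = - sign p"
    using sign_compose[OF permutation_swap_id pp] sign_swap_id[of a b] abne by simp
  have "poly_perm (transpose a b \<circ> p) (Delta n) = poly_perm (transpose a b) (of_int (sign p) * Delta n)"
    using bp by (simp add: pp_comp IH)
  also have "\<dots> = of_int (- sign p) * Delta n"
  proof (cases "evenperm p")
    case True
    then show ?thesis using Delta_transp[OF an bn abne] by (simp add: sign_def)
  next
    case False
    then show ?thesis using Delta_transp[OF an bn abne] by (simp add: sign_def pp_uminus)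
  qed
  finally have "poly_perm (transpose a b \<circ> p) (Delta n) = of_int (sign (transpose a b \<circ> p)) * Delta n"
    by (simp only: sc)
  then show ?case by (simp add: comp_def)
qed

lemma Pk_perm:
  assumes "\<tau> permutes {..<n}"
  shows "poly_perm \<tau> (Pk n k f) = Pk n k (poly_perm \<tau> f)"
proof -
  have bt: "bij \<tau>" using assms by (rule permutes_bij)
  have "poly_perm \<tau> (Pk n k f) = (\<Sum>i<n. (pderiv_var (\<tau> i) ^^ k) (poly_perm \<tau> f))"
    by (simp add: Pk_def pp_sum bt pp_fp)
  also have "\<dots> = (\<Sum>i<n. (pderiv_var i ^^ k) (poly_perm \<tau> f))"
    using sum.permute[OF assms, of "\<lambda>i. (pderiv_var i ^^ k) (poly_perm \<tau> f)"] by (simp add: o_def)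
  finally show ?thesis by (simp add: Pk_def)
qed

lemma sum_distinct_ge: "finite (S::nat set) \<Longrightarrow> card S choose 2 \<le> \<Sum> S"
proof (induction "card S" arbitrary: S)
  case 0
  then show ?case by simp
next
  case (Suc m)
  then have ne: "S \<noteq> {}" by auto
  define M where "M = Max S"
  have MS: "M \<in> S" using Suc.prems ne by (simp add: M_def)
  have c: "card (S - {M}) = m" using Suc.hyps(2) MS Suc.prems by simp
  have IH: "m choose 2 \<le> \<Sum> (S - {M})" using Suc.hyps(1)[of "S - {M}"] c Suc.prems by simp
  have "S \<subseteq> {..M}" using Suc.prems by (auto simp: M_def)
  then have "card S \<le> Suc M" using card_mono[of "{..M}" S] by simp
  then have mM: "m \<le> M" using Suc.hyps(2) by simp
  have "\<Sum> S = M + \<Sum> (S - {M})" using Suc.prems MS by (simp add: sum.remove)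
  moreover have "Suc m choose 2 = m + (m choose 2)" by (simp add: numeral_2_eq_2)
  ultimately show ?case using IH mM Suc.hyps(2)[symmetric] by simp
qed

lemma pigeon:
  assumes "inj_on f {..<n}"
  shows "n choose 2 \<le> (\<Sum>i<n. (f i :: nat))"
proof -
  have "card (f ` {..<n}) = n" using assms by (simp add: card_image)
  moreover have "(\<Sum>i<n. f i) = \<Sum> (f ` {..<n})" using assms by (simp add: sum.reindex)
  ultimately show ?thesis using sum_distinct_ge[of "f ` {..<n}"] by simp
qed

lemma alt_zero:
  assumes alt: "\<And>a b. a < n \<Longrightarrow> b < n \<Longrightarrow> a \<noteq> b \<Longrightarrow> poly_perm (transpose a b) g = - g"
    and piv: "poly_in_vars n g"
    and deg: "\<And>a. a \<in> ks g \<Longrightarrow> mono_deg a < n choose 2"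
  shows "g = 0"
proof (rule ccontr)
  assume "g \<noteq> 0"
  then obtain a where a: "a \<in> ks g" using keys_eq_empty[of g] by blast
  have kn: "ks a \<subseteq> {..<n}" using piv a by (simp add: poly_in_vars_def)
  show False
  proof (cases "inj_on (lk a) {..<n}")
    case True
    have "mono_deg a = (\<Sum>i<n. lk a i)" using kn by (simp add: mono_deg_superset)
    then show False using pigeon[OF True] deg[OF a] by simp
  next
    case False
    then obtain i j where ij: "i < n" "j < n" "i \<noteq> j" "lk a i = lk a j"
      by (auto simp: inj_on_def)
    let ?t = "transpose i j"
    have bt: "bij ?t" by simp
    have "mono_perm (inv ?t) a = a"
      by (simp add: mono_eq_iff lk_mono_perm[OF bt] transpose_def ij(4))
    then have "lk (poly_perm ?t g) a = lk g a" by (simp add: lk_poly_perm bt)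
    then have "lk g a = - lk g a" using alt[OF ij(1,2,3)] by simp
    then have "lk g a = 0" by simp
    then show False using a by (simp add: in_keys_iff)
  qed
qed

lemma Delta_Good: "Good n (Delta n)"
  unfolding Good_def
proof (intro conjI allI impI)
  show "poly_in_vars n (Delta n)" by (rule piv_Delta)
  fix k :: nat assume k: "1 \<le> k"
  show "Pk n k (Delta n) = 0"
  proof (rule alt_zero)
    fix a b assume ab: "a < n" "b < n" "a \<noteq> b"
    have p: "transpose a b permutes {..<n}" using ab by (intro permutes_swap_id) auto
    show "poly_perm (transpose a b) (Pk n k (Delta n)) = - Pk n k (Delta n)"
      by (simp add: Pk_perm[OF p] Delta_transp[OF ab] Pk_uminus)
  next
    show "poly_in_vars n (Pk n k (Delta n))"
      unfolding Pk_def by (intro piv_sum piv_fp piv_Delta)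
  next
    fix a assume "a \<in> ks (Pk n k (Delta n))"
    then have "a \<in> (\<Union>i\<in>{..<n}. ks ((pderiv_var i ^^ k) (Delta n)))"
      unfolding Pk_def using keys_sum[of "\<lambda>i. (pderiv_var i ^^ k) (Delta n)" "{..<n}"] by blast
    then obtain i where "a \<in> ks ((pderiv_var i ^^ k) (Delta n))" by blast
    then have "mono_deg a + k = n choose 2" using hom_fp_keys[OF Delta_hom] by blast
    then show "mono_deg a < n choose 2" using k by simp
  qed
qed


lemma rs_ws_sign:
  assumes fI: "finite I" and lI: "l \<in> I" and inj: "inj \<sigma>"
  shows "reorder_sign \<sigma> I * wsign (I - {l}) l = wsign (\<sigma> ` I - {\<sigma> l}) (\<sigma> l) * reorder_sign \<sigma> (I - {l})"
proof -
  define I' where "I' = I - {l}"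
  define inv where "inv K = {(a, b). a \<in> K \<and> b \<in> K \<and> a < b \<and> \<sigma> b < \<sigma> a}" for K
  define A1 where "A1 = {a\<in>I'. a < l \<and> \<sigma> a < \<sigma> l}"
  define A2 where "A2 = {a\<in>I'. a < l \<and> \<sigma> l < \<sigma> a}"
  define A3 where "A3 = {b\<in>I'. l < b \<and> \<sigma> b < \<sigma> l}"
  have fI': "finite I'" using fI by (simp add: I'_def)
  have injE: "\<sigma> x = \<sigma> y \<longleftrightarrow> x = y" for x y using inj by (meson injD)
  have lI': "l \<notin> I'" by (simp add: I'_def)
  have fin_inv: "finite (inv K)" if "finite K" for K
    by (rule finite_subset[of _ "K \<times> K"]) (use that in \<open>auto simp: inv_def\<close>)
  have fA: "finite A1" "finite A2" "finite A3" using fI' by (simp_all add: A1_def A2_def A3_def)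
  have e1: "inv I = inv I' \<union> (Pair l ` A3 \<union> (\<lambda>a. (a, l)) ` A2)"
    using lI by (auto simp: inv_def I'_def A2_def A3_def)
  have d1: "inv I' \<inter> (Pair l ` A3 \<union> (\<lambda>a. (a, l)) ` A2) = {}"
    using lI' by (auto simp: inv_def A2_def A3_def)
  have d1': "Pair l ` A3 \<inter> (\<lambda>a. (a, l)) ` A2 = {}"
    by (auto simp: A2_def A3_def)
  have c1: "card (inv I) = card (inv I') + card A3 + card A2"
  proof -
    have "card (inv I) = card (inv I') + card (Pair l ` A3 \<union> (\<lambda>a. (a, l)) ` A2)"
      unfolding e1 by (rule card_Un_disjoint) (use fin_inv[OF fI'] fA d1 in auto)
    also have "card (Pair l ` A3 \<union> (\<lambda>a. (a, l)) ` A2) = card (Pair l ` A3) + card ((\<lambda>a. (a, l)) ` A2)"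
      by (rule card_Un_disjoint) (use fA d1' in auto)
    also have "card (Pair l ` A3) = card A3" by (simp add: card_image inj_on_def)
    also have "card ((\<lambda>a. (a, l)) ` A2) = card A2" by (simp add: card_image inj_on_def)
    finally show ?thesis by simp
  qed
  have e2: "{a\<in>I'. a < l} = A1 \<union> A2"
    using lI' injE by (auto simp: A1_def A2_def) (metis linorder_neqE_nat)
  have c2: "card {a\<in>I'. a < l} = card A1 + card A2"
    unfolding e2 by (rule card_Un_disjoint) (use fA in \<open>auto simp: A1_def A2_def\<close>)
  have e3: "{y\<in>\<sigma> ` I - {\<sigma> l}. y < \<sigma> l} = \<sigma> ` (A1 \<union> A3)"
  proof (intro equalityI subsetI)
    fix y assume "y \<in> {y\<in>\<sigma> ` I - {\<sigma> l}. y < \<sigma> l}"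
    then obtain a where a: "a \<in> I" "y = \<sigma> a" "\<sigma> a \<noteq> \<sigma> l" "\<sigma> a < \<sigma> l" by auto
    then have "a \<in> I'" "a \<noteq> l" using injE by (auto simp: I'_def)
    then show "y \<in> \<sigma> ` (A1 \<union> A3)" using a by (auto simp: A1_def A3_def)
  next
    fix y assume "y \<in> \<sigma> ` (A1 \<union> A3)"
    then show "y \<in> {y\<in>\<sigma> ` I - {\<sigma> l}. y < \<sigma> l}"
      by (auto simp: A1_def A3_def I'_def)
  qed
  have c3: "card {y\<in>\<sigma> ` I - {\<sigma> l}. y < \<sigma> l} = card A1 + card A3"
  proof -
    have "card (\<sigma> ` (A1 \<union> A3)) = card (A1 \<union> A3)"
      by (rule card_image) (use inj in \<open>auto simp: inj_on_def injE\<close>)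
    also have "\<dots> = card A1 + card A3"
      by (rule card_Un_disjoint) (use fA in \<open>auto simp: A1_def A3_def\<close>)
    finally show ?thesis unfolding e3 .
  qed
  have "card (inv I) + card {a\<in>I'. a < l} =
      (card {y\<in>\<sigma> ` I - {\<sigma> l}. y < \<sigma> l} + card (inv I')) + 2 * card A2"
    using c1 c2 c3 by simp
  then have "(-1::rpoly) ^ (card (inv I) + card {a\<in>I'. a < l}) =
      (-1) ^ (card {y\<in>\<sigma> ` I - {\<sigma> l}. y < \<sigma> l} + card (inv I'))"
    by (simp add: power_add power_mult)
  then show ?thesis
    unfolding reorder_sign_def wsign_def power_add[symmetric] inv_def[symmetric] I'_def[symmetric]
    by simp
qed

lemma fp_rs: "(pderiv_var i ^^ k) (reorder_sign \<sigma> I * p) = reorder_sign \<sigma> I * (pderiv_var i ^^ k) p"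
  by (simp add: reorder_sign_def fp_sign)

lemma pp_ws: "bij \<sigma> \<Longrightarrow> poly_perm \<sigma> (wsign I l * p) = wsign I l * poly_perm \<sigma> p"
  by (simp add: wsign_def pp_sign)

lemma form_perm_dop:
  assumes sp: "\<sigma> permutes {..<n}"
  shows "form_perm n \<sigma> (dop n m \<omega>) = dop n m (form_perm n \<sigma> \<omega>)"
proof
  fix J
  have bs: "bij \<sigma>" using sp by (rule permutes_bij)
  have injs: "inj \<sigma>" using bs by (rule bij_is_inj)
  show "form_perm n \<sigma> (dop n m \<omega>) J = dop n m (form_perm n \<sigma> \<omega>) J"
  proof (cases "J \<subseteq> {..<n}")
    case False
    then show ?thesis by (simp add: form_perm_def dop_def)
  next
    case True
    define I where "I = inv \<sigma> ` J"
    have JI: "J = \<sigma> ` I" unfolding I_def using bs by (simp add: image_image bij_f_inv)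
    have isp: "inv \<sigma> permutes {..<n}" using sp by (rule permutes_inv)
    have In: "I \<subseteq> {..<n}" unfolding I_def using True permutes_image[OF isp] by blast
    have fI: "finite I" using In finite_subset by blast
    have imI: "inv \<sigma> ` (J - {\<sigma> l}) = I - {l}" if "l \<in> I" for l
    proof -
      have "\<sigma> ` I - {\<sigma> l} = \<sigma> ` (I - {l})" using injs that by (auto dest: injD)
      then show ?thesis unfolding JI using bs by (simp add: image_image bij_inv_f)
    qed
    have "form_perm n \<sigma> (dop n m \<omega>) J = reorder_sign \<sigma> I * poly_perm \<sigma> (dop n m \<omega> I)"
      using True by (simp add: form_perm_def I_def)
    also have "\<dots> = (\<Sum>l\<in>I. reorder_sign \<sigma> I * (wsign (I - {l}) l *
        (pderiv_var (\<sigma> l) ^^ m) (poly_perm \<sigma> (\<omega> (I - {l})))))"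
      using In bs by (simp add: dop_def pp_sum pp_ws pp_fp sum_distrib_left)
    also have "\<dots> = (\<Sum>l\<in>I. wsign (\<sigma> ` I - {\<sigma> l}) (\<sigma> l) * (reorder_sign \<sigma> (I - {l}) *
        (pderiv_var (\<sigma> l) ^^ m) (poly_perm \<sigma> (\<omega> (I - {l})))))"
    proof (rule sum.cong[OF refl])
      fix l assume "l \<in> I"
      then show "reorder_sign \<sigma> I * (wsign (I - {l}) l *
        (pderiv_var (\<sigma> l) ^^ m) (poly_perm \<sigma> (\<omega> (I - {l})))) =
        wsign (\<sigma> ` I - {\<sigma> l}) (\<sigma> l) * (reorder_sign \<sigma> (I - {l}) *
        (pderiv_var (\<sigma> l) ^^ m) (poly_perm \<sigma> (\<omega> (I - {l}))))"
        using rs_ws_sign[OF fI _ injs, of l] by (simp add: mult.assoc[symmetric])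
    qed
    also have "\<dots> = (\<Sum>l\<in>I. wsign (J - {\<sigma> l}) (\<sigma> l) *
        (pderiv_var (\<sigma> l) ^^ m) (form_perm n \<sigma> \<omega> (J - {\<sigma> l})))"
    proof (rule sum.cong[OF refl])
      fix l assume lI: "l \<in> I"
      have "J - {\<sigma> l} \<subseteq> {..<n}" using True by auto
      then have "form_perm n \<sigma> \<omega> (J - {\<sigma> l}) = reorder_sign \<sigma> (I - {l}) * poly_perm \<sigma> (\<omega> (I - {l}))"
        by (simp add: form_perm_def imI[OF lI])
      then show "wsign (\<sigma> ` I - {\<sigma> l}) (\<sigma> l) * (reorder_sign \<sigma> (I - {l}) *
        (pderiv_var (\<sigma> l) ^^ m) (poly_perm \<sigma> (\<omega> (I - {l})))) =
        wsign (J - {\<sigma> l}) (\<sigma> l) * (pderiv_var (\<sigma> l) ^^ m) (form_perm n \<sigma> \<omega> (J - {\<sigma> l}))"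
        by (simp add: fp_rs JI)
    qed
    also have "\<dots> = (\<Sum>l'\<in>J. wsign (J - {l'}) l' * (pderiv_var l' ^^ m) (form_perm n \<sigma> \<omega> (J - {l'})))"
      unfolding JI by (simp add: sum.reindex[OF inj_on_subset[OF injs subset_UNIV]])
    also have "\<dots> = dop n m (form_perm n \<sigma> \<omega>) J"
      using True by (simp add: dop_def)
    finally show ?thesis .
  qed
qed


lemma dop_zero: "dop n m (\<lambda>_. 0) = (\<lambda>_. 0)"
  by (simp add: fun_eq_iff dop_def fp_zero)

lemma dop_nonzero:
  assumes "dop n m \<omega> J \<noteq> 0"
  shows "J \<subseteq> {..<n} \<and> (\<exists>l\<in>J. \<omega> (J - {l}) \<noteq> 0)"
proof -
  have J: "J \<subseteq> {..<n}" using assms by (auto simp: dop_def split: if_splits)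
  show ?thesis
  proof (rule ccontr)
    assume "\<not> ?thesis"
    then have "\<forall>l\<in>J. \<omega> (J - {l}) = 0" using J by blast
    then have "dop n m \<omega> J = 0" by (simp add: dop_def fp_zero)
    with assms show False by simp
  qed
qed

lemma main_ind:
  assumes "\<forall>m\<in>set ms. 1 \<le> m"
  shows "(\<forall>I. omega_form n ms I \<noteq> 0 \<longrightarrow> I \<subseteq> {..<n} \<and> card I = length ms) \<and>
    (\<forall>I. Good n (omega_form n ms I) \<and> homogeneous ((n choose 2) - sum_list ms) (omega_form n ms I)) \<and>
    (\<forall>l. deltaop n l (omega_form n ms) = (\<lambda>_. 0))"
  using assms
proof (induction ms)
  case Nil
  have s: "omega_form n [] = Delta_form n" by (simp add: omega_form_def)
  show ?case unfolding s
  proof (intro conjI allI impI)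
    fix I assume "Delta_form n I \<noteq> 0"
    then show "I \<subseteq> {..<n}" "card I = length []" by (auto simp: Delta_form_def split: if_splits)
  next
    fix I show "Good n (Delta_form n I)" by (simp add: Delta_form_def Delta_Good Good_zero)
  next
    fix I show "homogeneous ((n choose 2) - sum_list []) (Delta_form n I)"
      by (simp add: Delta_form_def Delta_hom hom_zero)
  next
    fix l show "deltaop n l (Delta_form n) = (\<lambda>_. 0)"
      by (simp add: fun_eq_iff deltaop_def Delta_form_def fp_zero)
  qed
next
  case (Cons m ms)
  define \<omega> where "\<omega> = omega_form n ms"
  have s: "omega_form n (m # ms) = dop n m \<omega>" by (simp add: omega_form_def \<omega>_def)
  have m1: "1 \<le> m" using Cons.prems by simp
  have IH: "(\<forall>I. \<omega> I \<noteq> 0 \<longrightarrow> I \<subseteq> {..<n} \<and> card I = length ms)"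
     "\<forall>I. Good n (\<omega> I) \<and> homogeneous ((n choose 2) - sum_list ms) (\<omega> I)"
     "\<forall>l. deltaop n l \<omega> = (\<lambda>_. 0)"
    using Cons by (simp_all add: \<omega>_def)
  show ?case unfolding s
  proof (intro conjI allI impI)
    fix J assume nz: "dop n m \<omega> J \<noteq> 0"
    from dop_nonzero[OF nz] obtain l where J: "J \<subseteq> {..<n}" and l: "l \<in> J" "\<omega> (J - {l}) \<noteq> 0"
      by blast
    show "J \<subseteq> {..<n}" by (rule J)
    have fJ: "finite J" using J finite_subset by blast
    have "card (J - {l}) = length ms" using IH(1) l by blast
    then show "card J = length (m # ms)" using fJ l(1)
      by (simp add: card_Diff_singleton) (metis One_nat_def Suc_pred card_gt_0_iff empty_iff)
  next
    fix J
    show "Good n (dop n m \<omega> J)"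
      unfolding dop_def wsign_def
      using IH(2) by (auto intro!: Good_sum Good_sign Good_fp simp: Good_zero)
  next
    fix J
    define r where "r = (n choose 2) - sum_list ms"
    have e: "r - m = (n choose 2) - sum_list (m # ms)" by (simp add: r_def)
    have "homogeneous (r - m) (dop n m \<omega> J)"
      unfolding dop_def wsign_def
      using IH(2) unfolding r_def[symmetric] by (auto intro!: hom_sum hom_sign hom_fp simp: hom_zero)
    then show "homogeneous ((n choose 2) - sum_list (m # ms)) (dop n m \<omega> J)"
      by (simp only: e)
  next
    fix l
    show "deltaop n l (dop n m \<omega>) = (\<lambda>_. 0)"
    proof
      fix J
      show "deltaop n l (dop n m \<omega>) J = 0"
      proof (cases "J \<subseteq> {..<n}")
        case True
        have "Pk n (l + m) (\<omega> J) = 0" using IH(2) m1 by (simp add: Good_def)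
        moreover have "dop n m (deltaop n l \<omega>) J = 0" using IH(3) dop_zero by metis
        ultimately show ?thesis using dd_comm[OF True, of l m \<omega>] by simp
      qed (simp add: deltaop_def)
    qed
  qed
qed


lemma dop_sign: "dop n m (\<lambda>I. (-1::rpoly) ^ e * \<omega> I) = (\<lambda>J. (-1) ^ e * dop n m \<omega> J)"
  by (simp add: fun_eq_iff dop_def fp_sign sum_distrib_left mult.left_commute)

lemma sign_pow: "(of_int (sign \<sigma>) :: rpoly) = (-1) ^ (if evenperm \<sigma> then 0 else 1)"
  by (simp add: sign_def)

lemma form_perm_Delta:
  assumes sp: "\<sigma> permutes {..<n}"
  shows "form_perm n \<sigma> (Delta_form n) = (\<lambda>I. of_int (sign \<sigma>) * Delta_form n I)"
proof
  fix J
  have bs: "bij \<sigma>" using sp by (rule permutes_bij)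
  have e: "inv \<sigma> ` J = {} \<longleftrightarrow> J = {}" by simp
  show "form_perm n \<sigma> (Delta_form n) J = of_int (sign \<sigma>) * Delta_form n J"
    using bs by (auto simp: form_perm_def Delta_form_def Delta_sign[OF sp] pp_zero reorder_sign_def)
qed

lemma omega_equiv:
  assumes sp: "\<sigma> permutes {..<n}"
  shows "form_perm n \<sigma> (omega_form n ms) = (\<lambda>I. of_int (sign \<sigma>) * omega_form n ms I)"
proof (induction ms)
  case Nil
  then show ?case by (simp add: omega_form_def form_perm_Delta[OF sp])
next
  case (Cons m ms)
  have "form_perm n \<sigma> (omega_form n (m # ms)) = dop n m (form_perm n \<sigma> (omega_form n ms))"
    by (simp add: omega_form_def form_perm_dop[OF sp])
  also have "\<dots> = (\<lambda>I. of_int (sign \<sigma>) * omega_form n (m # ms) I)"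
    unfolding Cons sign_pow by (simp add: dop_sign omega_form_def)
  finally show ?case .
qed

theorem lemma10:
  fixes n :: nat and ms :: "nat list"
  assumes "sorted_wrt (>) ms"
    and "\<forall>m\<in>set ms. 1 \<le> m \<and> m \<le> n - 1"
  shows "omega_form n ms \<in> Hspace n ((n choose 2) - sum_list ms) (length ms)
    \<and> (\<forall>\<sigma>. \<sigma> permutes {..<n} \<longrightarrow>
          form_perm n \<sigma> (omega_form n ms) = (\<lambda>I. of_int (sign \<sigma>) * omega_form n ms I))"
proof
  have m1: "\<forall>m\<in>set ms. 1 \<le> m" using assms(2) by blast
  note M = main_ind[OF m1, of n]
  show "omega_form n ms \<in> Hspace n ((n choose 2) - sum_list ms) (length ms)"
    unfolding Hspace_def in_Omega_def using M by (auto simp: Good_def Good_harm)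
  show "\<forall>\<sigma>. \<sigma> permutes {..<n} \<longrightarrow>
          form_perm n \<sigma> (omega_form n ms) = (\<lambda>I. of_int (sign \<sigma>) * omega_form n ms I)"
    using omega_equiv by blast
qed


end
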